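(* Let $G$ and $H$ be two nontrivial connected graphs. For $\ast\in\{\boxtimes,\circ\}$, $C_{cc}(G\ast H)=\alpha(G\ast H)$.
   Context: All graphs are finite, simple and undirected. For a graph $G$ and $S\subseteq V(G)$, the cycle interval $\langle S\rangle$ consists of the vertices of $S$ together with every vertex $w\in V(G)\setminus S$ such that $G[S\cup\{w\}]$ contains a cycle through $w$; $S$ is cycle convex if $\langle S\rangle=S$. The cycle convexity number $C_{cc}(G)$ is the maximum cardinality of a proper (i.e. $\neq V(G)$) cycle convex subset of $V(G)$. $\alpha$ denotes the independence number. The strong product $G\boxtimes H$ has vertex set $V(G)\times V(H)$ with $(g_1,h_1)\sim(g_2,h_2)$ iff ($g_1\sim g_2$, $h_1=h_2$) or ($g_1=g_2$, $h_1\sim h_2$) or ($g_1\sim g_2$, $h_1\sim h_2$). The lexicographic product $G\circ H$ has vertex set $V(G)\times V(H)$ with $(g_1,h_1)\sim(g_2,h_2)$ iff $g_1\sim g_2$, or ($g_1=g_2$ and $h_1\sim h_2$). A graph is nontrivial if it has at least two vertices. *)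

theory Defs
  imports Main
begin

definition simple_graph :: "'a set \<Rightarrow> ('a \<Rightarrow> 'a \<Rightarrow> bool) \<Rightarrow> bool" where
  "simple_graph V E \<longleftrightarrow> finite V \<and> (\<forall>x y. E x y \<longrightarrow> x \<in> V \<and> y \<in> V)
     \<and> (\<forall>x y. E x y \<longrightarrow> E y x) \<and> (\<forall>x. \<not> E x x)"

definition connected_graph :: "'a set \<Rightarrow> ('a \<Rightarrow> 'a \<Rightarrow> bool) \<Rightarrow> bool" where
  "connected_graph V E \<longleftrightarrow> V \<noteq> {} \<and> (\<forall>u\<in>V. \<forall>v\<in>V. E\<^sup>*\<^sup>* u v)"

definition nontrivial_graph :: "'a set \<Rightarrow> bool" where
  "nontrivial_graph V \<longleftrightarrow> card V \<ge> 2"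

definition is_cycle :: "('a \<Rightarrow> 'a \<Rightarrow> bool) \<Rightarrow> 'a list \<Rightarrow> bool" where
  "is_cycle E cs \<longleftrightarrow> distinct cs \<and> length cs \<ge> 3
     \<and> (\<forall>i. Suc i < length cs \<longrightarrow> E (cs ! i) (cs ! Suc i))
     \<and> E (last cs) (hd cs)"

definition cycle_through :: "('a \<Rightarrow> 'a \<Rightarrow> bool) \<Rightarrow> 'a set \<Rightarrow> 'a \<Rightarrow> bool" where
  "cycle_through E T w \<longleftrightarrow> (\<exists>cs. is_cycle E cs \<and> set cs \<subseteq> T \<and> w \<in> set cs)"

definition cycle_interval :: "'a set \<Rightarrow> ('a \<Rightarrow> 'a \<Rightarrow> bool) \<Rightarrow> 'a set \<Rightarrow> 'a set" where
  "cycle_interval V E S = S \<union> {w \<in> V - S. cycle_through E (S \<union> {w}) w}"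

definition cycle_convex :: "'a set \<Rightarrow> ('a \<Rightarrow> 'a \<Rightarrow> bool) \<Rightarrow> 'a set \<Rightarrow> bool" where
  "cycle_convex V E S \<longleftrightarrow> S \<subseteq> V \<and> cycle_interval V E S = S"

definition cycle_convexity_number :: "'a set \<Rightarrow> ('a \<Rightarrow> 'a \<Rightarrow> bool) \<Rightarrow> nat" where
  "cycle_convexity_number V E =
     Max {card S | S. S \<subseteq> V \<and> S \<noteq> V \<and> cycle_convex V E S}"

definition independent_set :: "('a \<Rightarrow> 'a \<Rightarrow> bool) \<Rightarrow> 'a set \<Rightarrow> bool" where
  "independent_set E S \<longleftrightarrow> (\<forall>x\<in>S. \<forall>y\<in>S. \<not> E x y)"

definition independence_number :: "'a set \<Rightarrow> ('a \<Rightarrow> 'a \<Rightarrow> bool) \<Rightarrow> nat" where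
  "independence_number V E = Max {card S | S. S \<subseteq> V \<and> independent_set E S}"

definition strong_prod ::
  "'a set \<Rightarrow> ('a \<Rightarrow> 'a \<Rightarrow> bool) \<Rightarrow> 'b set \<Rightarrow> ('b \<Rightarrow> 'b \<Rightarrow> bool) \<Rightarrow> ('a \<times> 'b) \<Rightarrow> ('a \<times> 'b) \<Rightarrow> bool" where
  "strong_prod V1 E1 V2 E2 = (\<lambda>(g1, h1) (g2, h2).
     g1 \<in> V1 \<and> g2 \<in> V1 \<and> h1 \<in> V2 \<and> h2 \<in> V2 \<and>
     ((E1 g1 g2 \<and> h1 = h2) \<or> (g1 = g2 \<and> E2 h1 h2) \<or> (E1 g1 g2 \<and> E2 h1 h2)))"

definition lexicographic_prod ::
  "'a set \<Rightarrow> ('a \<Rightarrow> 'a \<Rightarrow> bool) \<Rightarrow> 'b set \<Rightarrow> ('b \<Rightarrow> 'b \<Rightarrow> bool) \<Rightarrow> ('a \<times> 'b) \<Rightarrow> ('a \<times> 'b) \<Rightarrow> bool" where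
  "lexicographic_prod V1 E1 V2 E2 = (\<lambda>(g1, h1) (g2, h2).
     g1 \<in> V1 \<and> g2 \<in> V1 \<and> h1 \<in> V2 \<and> h2 \<in> V2 \<and>
     (E1 g1 g2 \<or> (g1 = g2 \<and> E2 h1 h2)))"

end

theory Submission
  imports Defs
begin

definition tri_closed :: "('a \<Rightarrow> 'a \<Rightarrow> bool) \<Rightarrow> 'a set \<Rightarrow> bool" where
  "tri_closed E S \<longleftrightarrow> (\<forall>x y z. x \<in> S \<longrightarrow> y \<in> S \<longrightarrow> E x y \<longrightarrow> E x z \<longrightarrow> E y z \<longrightarrow> z \<in> S)"

lemma indep_convex:
  assumes "S \<subseteq> V" "independent_set E S"
  shows "cycle_convex V E S"
proof -
  have "\<not> cycle_through E (S \<union> {w}) w" if "w \<notin> S" for w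
  proof
    assume "cycle_through E (S \<union> {w}) w"
    then obtain cs where cyc: "is_cycle E cs" and sub: "set cs \<subseteq> S \<union> {w}" and win: "w \<in> set cs"
      unfolding cycle_through_def by blast
    from cyc have d: "distinct cs" and len: "length cs \<ge> 3"
      and step: "\<And>i. Suc i < length cs \<Longrightarrow> E (cs ! i) (cs ! Suc i)"
      and lh: "E (last cs) (hd cs)" unfolding is_cycle_def by auto
    from win obtain k where k: "k < length cs" "cs ! k = w" by (auto simp: in_set_conv_nth)
    have inS: "cs ! i \<in> S" if "i < length cs" "i \<noteq> k" for i
    proof -
      have "cs ! i \<noteq> w" using d that k nth_eq_iff_index_eq by metis
      moreover have "cs ! i \<in> set cs" using that by simp
      ultimately show ?thesis using sub by auto
    qed
    have "\<exists>i j. i < length cs \<and> j < length cs \<and> i \<noteq> k \<and> j \<noteq> k \<and> E (cs ! i) (cs ! j)"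
    proof (cases "k \<ge> 2")
      case True
      have "E (cs ! 0) (cs ! 1)" "0 < length cs" "1 < length cs" "0 \<noteq> k" "(1::nat) \<noteq> k"
        using step[of 0] len True by auto
      then show ?thesis by blast
    next
      case False
      then consider "k = 0" | "k = 1" by linarith
      then show ?thesis
      proof cases
        case 1
        have "E (cs ! 1) (cs ! 2)" "1 < length cs" "2 < length cs" "1 \<noteq> k" "(2::nat) \<noteq> k"
          using step[of 1] len 1 by (auto simp: numeral_2_eq_2)
        then show ?thesis by blast
      next
        case 2
        have ne: "cs \<noteq> []" using len by auto
        have "E (cs ! (length cs - 1)) (cs ! 0)" using lh ne by (simp add: last_conv_nth hd_conv_nth)
        moreover have "length cs - 1 < length cs" "0 < length cs" "length cs - 1 \<noteq> k" "(0::nat) \<noteq> k"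
          using 2 len by auto
        ultimately show ?thesis by blast
      qed
    qed
    then obtain i j where "i < length cs" "j < length cs" "i \<noteq> k" "j \<noteq> k" "E (cs ! i) (cs ! j)" by blast
    with inS assms(2) show False unfolding independent_set_def by blast
  qed
  then show ?thesis using assms(1) unfolding cycle_convex_def cycle_interval_def by auto
qed

lemma convex_tri:
  assumes "cycle_convex V E S" and inV: "\<And>x y. E x y \<Longrightarrow> x \<in> V \<and> y \<in> V"
    and sym: "\<And>x y. E x y \<Longrightarrow> E y x" and irr: "\<And>x. \<not> E x x"
  shows "tri_closed E S"
  unfolding tri_closed_def
proof (intro allI impI)
  fix x y z assume xs: "x \<in> S" and ys: "y \<in> S" and xy: "E x y" and xz: "E x z" and yz: "E y z"
  show "z \<in> S"
  proof (rule ccontr)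
    assume zn: "z \<notin> S"
    have "is_cycle E [x, y, z]" unfolding is_cycle_def
    proof (intro conjI allI impI)
      show "distinct [x, y, z]" using xy xz yz irr by auto
      show "3 \<le> length [x, y, z]" by simp
      show "E (last [x, y, z]) (hd [x, y, z])" using sym xz by simp
    next
      fix i assume "Suc i < length [x, y, z]"
      then have "i = 0 \<or> i = 1" by auto
      then show "E ([x, y, z] ! i) ([x, y, z] ! Suc i)" using xy yz by auto
    qed
    then have "cycle_through E (S \<union> {z}) z" unfolding cycle_through_def using xs ys by force
    moreover have "z \<in> V" using inV xz by blast
    ultimately have "z \<in> cycle_interval V E S" unfolding cycle_interval_def using zn by blast
    then show False using assms(1) zn unfolding cycle_convex_def by blast
  qed
qed

lemma generic:
  assumes fin: "finite V" and inV: "\<And>x y. E x y \<Longrightarrow> x \<in> V \<and> y \<in> V"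
    and sym: "\<And>x y. E x y \<Longrightarrow> E y x" and irr: "\<And>x. \<not> E x x" and edge: "E a b"
    and spread: "\<And>S x y. tri_closed E S \<Longrightarrow> x \<in> S \<Longrightarrow> y \<in> S \<Longrightarrow> E x y \<Longrightarrow> V \<subseteq> S"
  shows "cycle_convexity_number V E = independence_number V E"
proof -
  define A where "A = {card S | S. S \<subseteq> V \<and> S \<noteq> V \<and> cycle_convex V E S}"
  define B where "B = {card S | S. S \<subseteq> V \<and> independent_set E S}"
  have finA: "finite A" unfolding A_def
    by (rule finite_subset[of _ "card ` Pow V"]) (auto simp: fin)
  have finB: "finite B" unfolding B_def
    by (rule finite_subset[of _ "card ` Pow V"]) (auto simp: fin)
  have AB: "A \<subseteq> B"
  proof
    fix n assume "n \<in> A"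
    then obtain S where S: "n = card S" "S \<subseteq> V" "S \<noteq> V" "cycle_convex V E S" unfolding A_def by blast
    have "independent_set E S"
    proof (rule ccontr)
      assume "\<not> independent_set E S"
      then obtain x y where "x \<in> S" "y \<in> S" "E x y" unfolding independent_set_def by blast
      moreover have "tri_closed E S" using convex_tri[OF S(4) inV sym irr] by blast
      ultimately have "V \<subseteq> S" using spread by blast
      then show False using S by blast
    qed
    then show "n \<in> B" using S unfolding B_def by blast
  qed
  have "0 \<in> B" unfolding B_def independent_set_def by force
  then have Bne: "B \<noteq> {}" by blast
  have "Max B \<in> B" by (rule Max_in[OF finB Bne])
  then obtain I where I: "Max B = card I" "I \<subseteq> V" "independent_set E I"
    unfolding B_def by blast
  have "I \<noteq> V" using I(3) edge inV unfolding independent_set_def by blast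
  then have "card I \<in> A" using I indep_convex[OF I(2) I(3)] unfolding A_def by blast
  then have "Max B \<in> A" using I(1) by simp
  then have "Max B \<le> Max A" using finA by simp
  moreover have "A \<noteq> {}" using \<open>Max B \<in> A\<close> by blast
  then have "Max A \<le> Max B" using Max_mono[OF AB _ finB] by blast
  ultimately show ?thesis unfolding cycle_convexity_number_def independence_number_def A_def B_def
    by simp
qed

lemma propagate:
  assumes conn: "\<And>u v. u \<in> V \<Longrightarrow> v \<in> V \<Longrightarrow> E\<^sup>*\<^sup>* u v"
    and inV: "\<And>x y. E x y \<Longrightarrow> x \<in> V \<and> y \<in> V"
    and sym: "\<And>x y. E x y \<Longrightarrow> E y x"
    and loc: "\<And>x y z. x \<in> S \<Longrightarrow> y \<in> S \<Longrightarrow> E x y \<Longrightarrow> E x z \<Longrightarrow> z \<in> S"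
    and xs: "x \<in> S" and ys: "y \<in> S" and xy: "E x y"
  shows "V \<subseteq> S"
proof
  fix v assume "v \<in> V"
  then have "E\<^sup>*\<^sup>* x v" using conn inV xy by blast
  then have "v \<in> S \<and> (\<exists>u\<in>S. E v u)"
  proof (induction rule: rtranclp_induct)
    case base then show ?case using xs ys xy by blast
  next
    case (step w z)
    then obtain u where "w \<in> S" "u \<in> S" "E w u" by blast
    then have "z \<in> S" using loc step(2) by blast
    then show ?case using step(2) sym \<open>w \<in> S\<close> by blast
  qed
  then show "v \<in> S" by blast
qed

lemma prod_conn:
  assumes c1: "connected_graph V1 E1" and c2: "connected_graph V2 E2"
    and p1: "\<And>g g' h. E1 g g' \<Longrightarrow> h \<in> V2 \<Longrightarrow> P (g, h) (g', h)"
    and p2: "\<And>g h h'. E2 h h' \<Longrightarrow> g \<in> V1 \<Longrightarrow> P (g, h) (g, h')"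
    and u: "u \<in> V1 \<times> V2" and v: "v \<in> V1 \<times> V2"
  shows "P\<^sup>*\<^sup>* u v"
proof -
  obtain g h g' h' where uv: "u = (g, h)" "v = (g', h')" "g \<in> V1" "h \<in> V2" "g' \<in> V1" "h' \<in> V2"
    using u v by auto
  have a: "P\<^sup>*\<^sup>* (g, h) (g'', h)" if "E1\<^sup>*\<^sup>* g g''" for g''
    using that
  proof (induction rule: rtranclp_induct)
    case (step y z) then show ?case using p1[of y z h] uv by (meson rtranclp.rtrancl_into_rtrancl)
  qed simp
  have b: "P\<^sup>*\<^sup>* (g', h) (g', h'')" if "E2\<^sup>*\<^sup>* h h''" for h''
    using that
  proof (induction rule: rtranclp_induct)
    case (step y z) then show ?case using p2[of y z g'] uv by (meson rtranclp.rtrancl_into_rtrancl)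
  qed simp
  have "E1\<^sup>*\<^sup>* g g'" "E2\<^sup>*\<^sup>* h h'" using c1 c2 uv unfolding connected_graph_def by auto
  then show ?thesis using a b uv by (meson rtranclp_trans)
qed

lemma has_nbr:
  assumes "simple_graph V E" "connected_graph V E" "nontrivial_graph V" "g \<in> V"
  shows "\<exists>a. E g a"
proof -
  have "finite V" using assms(1) unfolding simple_graph_def by blast
  have "card V \<ge> 2" using assms(3) unfolding nontrivial_graph_def by blast
  have "\<exists>g'\<in>V. g' \<noteq> g"
  proof (rule ccontr)
    assume "\<not> (\<exists>g'\<in>V. g' \<noteq> g)"
    then have "V = {g}" using assms(4) by blast
    then show False using \<open>card V \<ge> 2\<close> by simp
  qed
  then obtain g' where "g' \<in> V" "g' \<noteq> g" by blast
  then have "E\<^sup>*\<^sup>* g g'" using assms(2,4) unfolding connected_graph_def by blast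
  then show ?thesis using \<open>g' \<noteq> g\<close> by (metis converse_rtranclpE)
qed

lemma sp_simp: "strong_prod V1 E1 V2 E2 (g1, h1) (g2, h2) \<longleftrightarrow>
     g1 \<in> V1 \<and> g2 \<in> V1 \<and> h1 \<in> V2 \<and> h2 \<in> V2 \<and>
     ((E1 g1 g2 \<and> h1 = h2) \<or> (g1 = g2 \<and> E2 h1 h2) \<or> (E1 g1 g2 \<and> E2 h1 h2))"
  by (simp add: strong_prod_def)

lemma lp_simp: "lexicographic_prod V1 E1 V2 E2 (g1, h1) (g2, h2) \<longleftrightarrow>
     g1 \<in> V1 \<and> g2 \<in> V1 \<and> h1 \<in> V2 \<and> h2 \<in> V2 \<and>
     (E1 g1 g2 \<or> (g1 = g2 \<and> E2 h1 h2))"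
  by (simp add: lexicographic_prod_def)

lemma strong_local:
  assumes s1: "simple_graph V1 E1" and s2: "simple_graph V2 E2"
    and ex1: "\<And>g. g \<in> V1 \<Longrightarrow> \<exists>a. E1 g a" and ex2: "\<And>h. h \<in> V2 \<Longrightarrow> \<exists>b. E2 h b"
    and tri: "tri_closed (strong_prod V1 E1 V2 E2) S"
    and xs: "(g, h) \<in> S" and ys: "y \<in> S" and xy: "strong_prod V1 E1 V2 E2 (g, h) y"
    and xz: "strong_prod V1 E1 V2 E2 (g, h) z"
  shows "z \<in> S"
proof -
  let ?P = "strong_prod V1 E1 V2 E2"
  have sym1: "\<And>a b. E1 a b \<Longrightarrow> E1 b a" and in1: "\<And>a b. E1 a b \<Longrightarrow> a \<in> V1 \<and> b \<in> V1"
    using s1 unfolding simple_graph_def by blast+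
  have sym2: "\<And>a b. E2 a b \<Longrightarrow> E2 b a" and in2: "\<And>a b. E2 a b \<Longrightarrow> a \<in> V2 \<and> b \<in> V2"
    using s2 unfolding simple_graph_def by blast+
  have T: "\<And>u v w. u \<in> S \<Longrightarrow> v \<in> S \<Longrightarrow> ?P u v \<Longrightarrow> ?P u w \<Longrightarrow> ?P v w \<Longrightarrow> w \<in> S"
    using tri unfolding tri_closed_def by blast
  have gV: "g \<in> V1" "h \<in> V2" using xy unfolding strong_prod_def by (auto split: prod.splits)
  have BfromA: "(a, h) \<in> S" if "E2 h b" "(g, b) \<in> S" "E1 g a" for a b
    using T[OF xs that(2), of "(a, h)"] that gV in1 in2 sym2 by (auto simp: sp_simp)
  have AfromB: "(g, b) \<in> S" if "E1 g a" "(a, h) \<in> S" "E2 h b" for a b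
    using T[OF xs that(2), of "(g, b)"] that gV in1 in2 sym1 by (auto simp: sp_simp)
  have CfromA: "(a, b) \<in> S" if "E2 h b" "(g, b) \<in> S" "E1 g a" for a b
    using T[OF xs that(2), of "(a, b)"] that gV in1 in2 by (auto simp: sp_simp)
  have full: "z \<in> S" if A: "E2 h b" "(g, b) \<in> S" for b
  proof -
    obtain a0 where a0: "E1 g a0" using ex1 gV by blast
    have allB: "(a, h) \<in> S" if "E1 g a" for a using BfromA[OF A that] .
    have allA: "(g, b') \<in> S" if "E2 h b'" for b' using AfromB[OF a0 allB[OF a0] that] .
    obtain gz hz where z: "z = (gz, hz)" by (cases z)
    from xz z have "(E1 g gz \<and> h = hz) \<or> (g = gz \<and> E2 h hz) \<or> (E1 g gz \<and> E2 h hz)"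
      by (simp add: sp_simp)
    then consider "E1 g gz" "h = hz" | "g = gz" "E2 h hz" | "E1 g gz" "E2 h hz" by blast
    then show ?thesis
    proof cases
      case 1 then show ?thesis using allB[OF 1(1)] z by simp
    next
      case 2 then show ?thesis using allA[OF 2(2)] z by simp
    next
      case 3 then show ?thesis using CfromA[OF 3(2) allA[OF 3(2)] 3(1)] z by simp
    qed
  qed
  obtain gy hy where y: "y = (gy, hy)" by (cases y)
  from xy y have "(E1 g gy \<and> h = hy) \<or> (g = gy \<and> E2 h hy) \<or> (E1 g gy \<and> E2 h hy)"
    by (simp add: sp_simp)
  then consider "E1 g gy" "h = hy" | "g = gy" "E2 h hy" | "E1 g gy" "E2 h hy" by blast
  then show ?thesis
  proof cases
    case 1
    obtain b where "E2 h b" using ex2 gV by blast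
    note b = \<open>E2 h b\<close>
    have "(gy, h) \<in> S" using ys y 1(2) by simp
    then have "(g, b) \<in> S" using AfromB[OF 1(1) _ b] by simp
    then show ?thesis using full[OF b] by simp
  next
    case 2
    have "(g, hy) \<in> S" using ys y 2(1) by simp
    then show ?thesis using full[OF 2(2)] by simp
  next
    case 3
    have "(g, hy) \<in> S"
      using T[OF xs ys, of "(g, hy)"] 3 y gV in1 in2 sym1 by (auto simp: sp_simp)
    then show ?thesis using full[OF 3(2)] by simp
  qed
qed

lemma lex_local:
  assumes s1: "simple_graph V1 E1" and s2: "simple_graph V2 E2"
    and ex1: "\<And>g. g \<in> V1 \<Longrightarrow> \<exists>a. E1 g a" and ex2: "\<And>h. h \<in> V2 \<Longrightarrow> \<exists>b. E2 h b"
    and tri: "tri_closed (lexicographic_prod V1 E1 V2 E2) S"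
    and xs: "(g, h) \<in> S" and ys: "y \<in> S" and xy: "lexicographic_prod V1 E1 V2 E2 (g, h) y"
    and xz: "lexicographic_prod V1 E1 V2 E2 (g, h) z"
  shows "z \<in> S"
proof -
  let ?P = "lexicographic_prod V1 E1 V2 E2"
  have sym1: "\<And>a b. E1 a b \<Longrightarrow> E1 b a" and in1: "\<And>a b. E1 a b \<Longrightarrow> a \<in> V1 \<and> b \<in> V1"
    using s1 unfolding simple_graph_def by blast+
  have sym2: "\<And>a b. E2 a b \<Longrightarrow> E2 b a" and in2: "\<And>a b. E2 a b \<Longrightarrow> a \<in> V2 \<and> b \<in> V2"
    using s2 unfolding simple_graph_def by blast+
  have T: "\<And>u v w. u \<in> S \<Longrightarrow> v \<in> S \<Longrightarrow> ?P u v \<Longrightarrow> ?P u w \<Longrightarrow> ?P v w \<Longrightarrow> w \<in> S"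
    using tri unfolding tri_closed_def by blast
  have gV: "g \<in> V1" "h \<in> V2" using xy unfolding lexicographic_prod_def by (auto split: prod.splits)
  have BfromA: "(a, c) \<in> S" if "E2 h b" "(g, b) \<in> S" "E1 g a" "c \<in> V2" for a b c
    using T[OF xs that(2), of "(a, c)"] that gV in1[OF that(3)] in2[OF that(1)] by (auto simp: lp_simp)
  have AfromB: "(g, b) \<in> S" if "E1 g a" "(a, c) \<in> S" "c \<in> V2" "E2 h b" for a b c
    using T[OF xs that(2), of "(g, b)"] that gV in1[OF that(1)] in2[OF that(4)] sym1[OF that(1)] by (auto simp: lp_simp)
  have full: "z \<in> S" if A: "E2 h b" "(g, b) \<in> S" for b
  proof -
    obtain a0 where a0: "E1 g a0" using ex1 gV by blast
    have allB: "(a, c) \<in> S" if "E1 g a" "c \<in> V2" for a c using BfromA[OF A that] .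
    have allA: "(g, b') \<in> S" if "E2 h b'" for b' using AfromB[OF a0 allB[OF a0 gV(2)] gV(2) that] .
    obtain gz hz where z: "z = (gz, hz)" by (cases z)
    from xz z have "(E1 g gz \<and> hz \<in> V2) \<or> (g = gz \<and> E2 h hz)"
      by (simp add: lp_simp)
    then show ?thesis
    proof
      assume "E1 g gz \<and> hz \<in> V2" then show ?thesis using allB z by simp
    next
      assume "g = gz \<and> E2 h hz" then show ?thesis using allA z by simp
    qed
  qed
  obtain gy hy where y: "y = (gy, hy)" by (cases y)
  from xy y have "(E1 g gy \<and> hy \<in> V2) \<or> (g = gy \<and> E2 h hy)"
    by (simp add: lp_simp)
  then show ?thesis
  proof
    assume 1: "E1 g gy \<and> hy \<in> V2"
    obtain b where "E2 h b" using ex2 gV by blast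
    note b = \<open>E2 h b\<close>
    have "(gy, hy) \<in> S" using ys y by simp
    then have "(g, b) \<in> S" using AfromB[of gy hy b] 1 b by simp
    then show ?thesis using full[OF b] by simp
  next
    assume 2: "g = gy \<and> E2 h hy"
    then have "(g, hy) \<in> S" using ys y by simp
    then show ?thesis using full[of hy] 2 by simp
  qed
qed

lemma sp_sym:
  assumes "\<And>a b. E1 a b \<Longrightarrow> E1 b a" "\<And>a b. E2 a b \<Longrightarrow> E2 b a"
    and "strong_prod V1 E1 V2 E2 x y"
  shows "strong_prod V1 E1 V2 E2 y x"
proof -
  obtain a b c d where "x = (a, b)" "y = (c, d)" by (cases x, cases y)
  then show ?thesis using assms(3) assms(1)[of a c] assms(2)[of b d] by (auto simp: sp_simp)
qed

lemma lp_sym: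
  assumes "\<And>a b. E1 a b \<Longrightarrow> E1 b a" "\<And>a b. E2 a b \<Longrightarrow> E2 b a"
    and "lexicographic_prod V1 E1 V2 E2 x y"
  shows "lexicographic_prod V1 E1 V2 E2 y x"
proof -
  obtain a b c d where "x = (a, b)" "y = (c, d)" by (cases x, cases y)
  then show ?thesis using assms(3) assms(1)[of a c] assms(2)[of b d] by (auto simp: lp_simp)
qed

lemma sp_irr:
  assumes "\<And>a. \<not> E1 a a" "\<And>a. \<not> E2 a a"
  shows "\<not> strong_prod V1 E1 V2 E2 x x"
  using assms by (cases x) (auto simp: sp_simp)

lemma lp_irr:
  assumes "\<And>a. \<not> E1 a a" "\<And>a. \<not> E2 a a"
  shows "\<not> lexicographic_prod V1 E1 V2 E2 x x"
  using assms by (cases x) (auto simp: lp_simp)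

lemma sp_in: "strong_prod V1 E1 V2 E2 x y \<Longrightarrow> x \<in> V1 \<times> V2 \<and> y \<in> V1 \<times> V2"
  by (cases x, cases y) (auto simp: sp_simp)

lemma lp_in: "lexicographic_prod V1 E1 V2 E2 x y \<Longrightarrow> x \<in> V1 \<times> V2 \<and> y \<in> V1 \<times> V2"
  by (cases x, cases y) (auto simp: lp_simp)

theorem mainTheorem14:
  fixes V1 :: "'a set" and E1 :: "'a \<Rightarrow> 'a \<Rightarrow> bool"
    and V2 :: "'b set" and E2 :: "'b \<Rightarrow> 'b \<Rightarrow> bool"
  assumes "simple_graph V1 E1" and "connected_graph V1 E1" and "nontrivial_graph V1"
    and "simple_graph V2 E2" and "connected_graph V2 E2" and "nontrivial_graph V2"
  shows "cycle_convexity_number (V1 \<times> V2) (strong_prod V1 E1 V2 E2)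
           = independence_number (V1 \<times> V2) (strong_prod V1 E1 V2 E2)
       \<and> cycle_convexity_number (V1 \<times> V2) (lexicographic_prod V1 E1 V2 E2)
           = independence_number (V1 \<times> V2) (lexicographic_prod V1 E1 V2 E2)"
proof -
  note s1 = assms(1) and s2 = assms(4)
  have sym1: "\<And>a b. E1 a b \<Longrightarrow> E1 b a" and in1: "\<And>a b. E1 a b \<Longrightarrow> a \<in> V1 \<and> b \<in> V1"
    and irr1: "\<And>a. \<not> E1 a a" and fin1: "finite V1"
    using s1 unfolding simple_graph_def by blast+
  have sym2: "\<And>a b. E2 a b \<Longrightarrow> E2 b a" and in2: "\<And>a b. E2 a b \<Longrightarrow> a \<in> V2 \<and> b \<in> V2"
    and irr2: "\<And>a. \<not> E2 a a" and fin2: "finite V2"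
    using s2 unfolding simple_graph_def by blast+
  have ex1: "\<And>g. g \<in> V1 \<Longrightarrow> \<exists>a. E1 g a" by (rule has_nbr[OF assms(1-3)])
  have ex2: "\<And>h. h \<in> V2 \<Longrightarrow> \<exists>b. E2 h b" by (rule has_nbr[OF assms(4-6)])
  obtain h0 where h0: "h0 \<in> V2" using assms(5) unfolding connected_graph_def by blast
  obtain g0 where g0: "g0 \<in> V1" using assms(2) unfolding connected_graph_def by blast
  obtain a0 where a0: "E1 g0 a0" using ex1 g0 by blast
  have fin: "finite (V1 \<times> V2)" using fin1 fin2 by simp
  let ?S = "strong_prod V1 E1 V2 E2"
  let ?L = "lexicographic_prod V1 E1 V2 E2"
  have A: "cycle_convexity_number (V1 \<times> V2) ?S = independence_number (V1 \<times> V2) ?S"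
  proof (rule generic[OF fin])
    show "\<And>x y. ?S x y \<Longrightarrow> x \<in> V1 \<times> V2 \<and> y \<in> V1 \<times> V2"
      by (rule sp_in)
    show "\<And>x y. ?S x y \<Longrightarrow> ?S y x"
      by (rule sp_sym[OF sym1 sym2])
    show "\<And>x. \<not> ?S x x"
      by (rule sp_irr[OF irr1 irr2])
    show "?S (g0, h0) (a0, h0)" using a0 g0 h0 in1 by (auto simp: sp_simp)
  next
    fix T x y assume tri: "tri_closed ?S T" and "x \<in> T" "y \<in> T" "?S x y"
    show "V1 \<times> V2 \<subseteq> T"
    proof (rule propagate[of _ ?S])
      show "\<And>u v. u \<in> V1 \<times> V2 \<Longrightarrow> v \<in> V1 \<times> V2 \<Longrightarrow> ?S\<^sup>*\<^sup>* u v"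
        by (rule prod_conn[OF assms(2) assms(5)]) (auto simp: sp_simp dest: in1 in2)
      show "\<And>x y. ?S x y \<Longrightarrow> x \<in> V1 \<times> V2 \<and> y \<in> V1 \<times> V2"
        by (rule sp_in)
      show "\<And>x y. ?S x y \<Longrightarrow> ?S y x"
        by (rule sp_sym[OF sym1 sym2])
      show "\<And>x y z. x \<in> T \<Longrightarrow> y \<in> T \<Longrightarrow> ?S x y \<Longrightarrow> ?S x z \<Longrightarrow> z \<in> T"
      proof -
        let ?P = ?S
        fix x y z assume "x \<in> T" "y \<in> T" "?P x y" "?P x z"
        moreover obtain g h where "x = (g, h)" by (cases x)
        ultimately show "z \<in> T" using strong_local[OF s1 s2 ex1 ex2 tri, of g h y z] by simp
      qed
    qed fact+
  qed
  have B: "cycle_convexity_number (V1 \<times> V2) ?L = independence_number (V1 \<times> V2) ?L"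
  proof (rule generic[OF fin])
    show "\<And>x y. ?L x y \<Longrightarrow> x \<in> V1 \<times> V2 \<and> y \<in> V1 \<times> V2"
      by (rule lp_in)
    show "\<And>x y. ?L x y \<Longrightarrow> ?L y x"
      by (rule lp_sym[OF sym1 sym2])
    show "\<And>x. \<not> ?L x x"
      by (rule lp_irr[OF irr1 irr2])
    show "?L (g0, h0) (a0, h0)" using a0 g0 h0 in1 by (auto simp: lp_simp)
  next
    fix T x y assume tri: "tri_closed ?L T" and "x \<in> T" "y \<in> T" "?L x y"
    show "V1 \<times> V2 \<subseteq> T"
    proof (rule propagate[of _ ?L])
      show "\<And>u v. u \<in> V1 \<times> V2 \<Longrightarrow> v \<in> V1 \<times> V2 \<Longrightarrow> ?L\<^sup>*\<^sup>* u v"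
        by (rule prod_conn[OF assms(2) assms(5)]) (auto simp: lp_simp dest: in1 in2)
      show "\<And>x y. ?L x y \<Longrightarrow> x \<in> V1 \<times> V2 \<and> y \<in> V1 \<times> V2"
        by (rule lp_in)
      show "\<And>x y. ?L x y \<Longrightarrow> ?L y x"
        by (rule lp_sym[OF sym1 sym2])
      show "\<And>x y z. x \<in> T \<Longrightarrow> y \<in> T \<Longrightarrow> ?L x y \<Longrightarrow> ?L x z \<Longrightarrow> z \<in> T"
      proof -
        let ?P = ?L
        fix x y z assume "x \<in> T" "y \<in> T" "?P x y" "?P x z"
        moreover obtain g h where "x = (g, h)" by (cases x)
        ultimately show "z \<in> T" using lex_local[OF s1 s2 ex1 ex2 tri, of g h y z] by simp
      qed
    qed fact+
  qed
  show ?thesis using A B by blast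
qed

end
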